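(* Consider chained iterated learning in the Gaussian setting with prior $N(\bar\mu,\bar\sigma^2)$, likelihood $N(h,\sigma^2)$, initial teacher distribution $N(\mu_0,\sigma_0^2)$, and sample sizes $m_t$. For any $0<\varepsilon<1$ and any constant $c>0$, the sample size sequence $$m_t=\frac{|\mu_0-\bar\mu|}{\varepsilon}\Bigl(1+\frac1c\Bigr)\Bigl(\frac{\sigma}{\bar\sigma}\Bigr)^2t^{1+c}$$ makes chained iterated learning strongly $\varepsilon$-self-sustaining, i.e., $|\mathbb E\,\mu_t-\mu_0|\le\varepsilon$ for all $t$ and $\sigma_t^2+\operatorname{Var}\mu_t\to0$ as $t\to\infty$.
   Context: Gaussian iterated learning: hypotheses $h\in\mathbb R$; every learner has prior $N(\bar\mu,\bar\sigma^2)$; data generated from hypothesis $h$ is $d=h+\phi$ with $\phi\sim N(0,\sigma^2)$. Learner $0$ is the original teacher, with "posterior" $N(\mu_0,\sigma_0^2)$. Write $\tau=1/\sigma^2$, $\bar\tau=1/\bar\sigma^2$. Learner $t\ge1$ receives data $d_{t,1},\dots,d_{t,m_t}$ from learner $t-1$ and Bayes-updates, obtaining the Gaussian posterior $N(\mu_t,\sigma_t^2)$ with $\mu_t=\frac{\bar\tau\bar\mu+\tau(d_{t,1}+\dots+d_{t,m_t})}{\bar\tau+m_t\tau}$ and $1/\sigma_t^2=\bar\tau+m_t\tau$. Each datum is drawn from learner $t-1$'s posterior with noise: the $d_{t,i}$ are mutually independent, each distributed as $N(\mathbb E\mu_{t-1},\operatorname{Var}\mu_{t-1}+\sigma_{t-1}^2+\sigma^2)$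 (with $\mu_0$ deterministic, $\operatorname{Var}\mu_0=0$), so that $\mathbb E\mu_t=\frac{\bar\tau\bar\mu+m_t\tau\,\mathbb E\mu_{t-1}}{\bar\tau+m_t\tau}$ and $\operatorname{Var}\mu_t=\frac{m_t\tau^2}{(\bar\tau+m_t\tau)^2}(\operatorname{Var}\mu_{t-1}+\sigma_{t-1}^2+\sigma^2)$. Iterated learning is $\varepsilon$-self-sustaining if $|\mathbb E\mu_t-\mu_0|\le\varepsilon$ and $\sigma_t^2+\operatorname{Var}\mu_t$ stays bounded for all $t$; strongly $\varepsilon$-self-sustaining if moreover $\sigma_t^2+\operatorname{Var}\mu_t\to0$. *)

theory Defs
  imports Complex_Main
begin

text \<open>Parameters:
  m :: nat \<Rightarrow> real   sample sizes (m t used by learner t \<ge> 1),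
  taub = 1/sigmabar^2 (prior precision), mub = prior mean,
  tau = 1/sigma^2 (noise precision), mu0, sigma0 the original teacher.\<close>

primrec Emu :: "(nat \<Rightarrow> real) \<Rightarrow> real \<Rightarrow> real \<Rightarrow> real \<Rightarrow> real \<Rightarrow> nat \<Rightarrow> real" where
  "Emu m taub mub tau mu0 0 = mu0"
| "Emu m taub mub tau mu0 (Suc t) =
     (taub * mub + m (Suc t) * tau * Emu m taub mub tau mu0 t) / (taub + m (Suc t) * tau)"

primrec sigsq :: "(nat \<Rightarrow> real) \<Rightarrow> real \<Rightarrow> real \<Rightarrow> real \<Rightarrow> nat \<Rightarrow> real" where
  "sigsq m taub tau sigma0 0 = sigma0\<^sup>2"
| "sigsq m taub tau sigma0 (Suc t) = 1 / (taub + m (Suc t) * tau)"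

primrec Varmu :: "(nat \<Rightarrow> real) \<Rightarrow> real \<Rightarrow> real \<Rightarrow> real \<Rightarrow> nat \<Rightarrow> real" where
  "Varmu m taub tau sigma0 0 = 0"
| "Varmu m taub tau sigma0 (Suc t) =
     m (Suc t) * tau\<^sup>2 / (taub + m (Suc t) * tau)\<^sup>2
       * (Varmu m taub tau sigma0 t + sigsq m taub tau sigma0 t + 1 / tau)"

definition self_sustaining ::
  "(nat \<Rightarrow> real) \<Rightarrow> real \<Rightarrow> real \<Rightarrow> real \<Rightarrow> real \<Rightarrow> real \<Rightarrow> real \<Rightarrow> bool" where
  "self_sustaining m taub mub tau mu0 sigma0 eps \<longleftrightarrow>
     (\<forall>t. \<bar>Emu m taub mub tau mu0 t - mu0\<bar> \<le> eps) \<and>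
     Bseq (\<lambda>t. sigsq m taub tau sigma0 t + Varmu m taub tau sigma0 t)"

definition strongly_self_sustaining ::
  "(nat \<Rightarrow> real) \<Rightarrow> real \<Rightarrow> real \<Rightarrow> real \<Rightarrow> real \<Rightarrow> real \<Rightarrow> real \<Rightarrow> bool" where
  "strongly_self_sustaining m taub mub tau mu0 sigma0 eps \<longleftrightarrow>
     self_sustaining m taub mub tau mu0 sigma0 eps \<and>
     (\<lambda>t. sigsq m taub tau sigma0 t + Varmu m taub tau sigma0 t) \<longlonglongrightarrow> 0"

end

theory Submission
  imports Defs
begin

lemma key_ineq:
  fixes t c :: real assumes "t \<ge> 1" "c > 0"
  shows "(t+1) powr (-(1+c)) \<le> (t powr (-c) - (t+1) powr (-c)) / c"
proof -
  have t0: "t > 0" using assms by simp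
  have l: "ln (t/(t+1)) \<le> t/(t+1) - 1" using t0 by (intro ln_le_minus_one) auto
  have "t/(t+1) - 1 = - 1/(t+1)" using t0 by (simp add: field_simps)
  with l have l2: "ln (t+1) - ln t \<ge> 1/(t+1)" using t0 by (simp add: ln_div)
  have "1 + c/(t+1) \<le> exp (c/(t+1))" using exp_ge_add_one_self[of "c/(t+1)"] by simp
  also have "\<dots> \<le> exp (c * (ln (t+1) - ln t))"
    using l2 assms by (simp add: divide_simps mult_left_mono)
  finally have e: "1 + c/(t+1) \<le> exp (c * (ln (t+1) - ln t))" .
  have p1: "(t+1) powr (-(1+c)) = exp (-c * ln (t+1)) / (t+1)"
    using t0 by (simp add: powr_def exp_diff algebra_simps exp_minus field_simps)
  have p2: "(t+1) powr (-c) = exp (-c * ln (t+1))" using t0 by (simp add: powr_def)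
  have p3: "t powr (-c) = exp (-c * ln (t+1)) * exp (c * (ln (t+1) - ln t))"
    using t0 by (simp add: powr_def exp_add[symmetric] algebra_simps)
  have q: "exp (-c * ln (t+1)) > 0" by simp
  have "c * (exp (-c * ln (t+1)) / (t+1)) + exp (-c * ln (t+1))
        = exp (-c * ln (t+1)) * (1 + c/(t+1))" by (simp add: field_simps)
  also have "\<dots> \<le> exp (-c * ln (t+1)) * exp (c * (ln (t+1) - ln t))"
    using e q by (intro mult_left_mono) auto
  finally have "c * (t+1) powr (-(1+c)) + (t+1) powr (-c) \<le> t powr (-c)"
    unfolding p1 p2 p3 by simp
  then show ?thesis using assms by (simp add: field_simps)
qed

lemma sum_bound:
  fixes c :: real assumes "c > 0"
  shows "(\<Sum>s=1..t. real s powr (-(1+c))) \<le> 1 + 1/c - (if t = 0 then 1/c else real t powr (-c) / c)"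
proof (induction t)
  case 0 then show ?case by simp
next
  case (Suc t)
  show ?case
  proof (cases "t = 0")
    case True then show ?thesis by simp
  next
    case False
    have "real t \<ge> 1" using False by simp
    from key_ineq[OF this assms] have "real (Suc t) powr (-(1+c)) \<le> (real t powr (-c) - real (Suc t) powr (-c)) / c"
      by (simp add: add.commute)
    with Suc False show ?thesis by (simp add: diff_divide_distrib)
  qed
qed

lemma sum_bound2:
  fixes c :: real assumes "c > 0"
  shows "(\<Sum>s=1..t. real s powr (-(1+c))) \<le> 1 + 1/c"
proof -
  have "0 \<le> (if t = 0 then 1/c else real t powr (-c) / c)" using assms by simp
  then show ?thesis using sum_bound[OF assms, of t] by linarith
qed

lemma E_step:
  fixes a p E mub mu0 :: real assumes "a>0" "p \<ge> 0"
  shows "\<bar>(a*mub + p*E)/(a+p) - mu0\<bar> \<le> \<bar>E - mu0\<bar> + \<bar>mu0-mub\<bar> * (a/(a+p))"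
proof -
  have ap: "a + p \<noteq> 0" using assms by simp
  have "(a*mub + p*E)/(a+p) - mu0 = (p/(a+p)) * (E - mu0) + (a/(a+p)) * (mub - mu0)"
  proof -
    have "(a*mub + p*E)/(a+p) - mu0 = (a*mub + p*E)/(a+p) - ((a+p)*mu0)/(a+p)" using ap by simp
    also have "\<dots> = (p*(E - mu0) + a*(mub - mu0))/(a+p)"
      by (simp only: diff_divide_distrib[symmetric]) (simp add: algebra_simps)
    also have "\<dots> = (p/(a+p)) * (E - mu0) + (a/(a+p)) * (mub - mu0)"
      by (simp add: add_divide_distrib)
    finally show ?thesis .
  qed
  also have "\<bar>\<dots>\<bar> \<le> (p/(a+p)) * \<bar>E - mu0\<bar> + (a/(a+p)) * \<bar>mu0 - mub\<bar>"
    using assms by (auto intro!: order.trans[OF abs_triangle_ineq] simp: abs_mult abs_minus_commute)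
  also have "\<dots> \<le> \<bar>E - mu0\<bar> + (a/(a+p)) * \<bar>mu0 - mub\<bar>"
    using assms by (intro add_right_mono mult_left_le_one_le) auto
  finally show ?thesis by (simp add: mult.commute)
qed

lemma decay:
  fixes W g h :: "nat \<Rightarrow> real"
  assumes W0: "\<And>n. 0 \<le> W n" and Ws: "\<And>n. W (Suc n) \<le> g n * W n + h n"
    and g0: "\<And>n. 0 \<le> g n" and gl: "g \<longlonglongrightarrow> 0" and hl: "h \<longlonglongrightarrow> 0"
  shows "W \<longlonglongrightarrow> 0"
proof -
  have "eventually (\<lambda>n. g n < 1/2) sequentially" using gl by (intro order_tendstoD(2)) auto
  moreover have "eventually (\<lambda>n. h n < 1) sequentially" using hl by (intro order_tendstoD(2)) auto
  ultimately have "eventually (\<lambda>n. g n < 1/2 \<and> h n < 1) sequentially" by (rule eventually_conj)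
  then obtain N where N: "\<And>n. n \<ge> N \<Longrightarrow> g n < 1/2 \<and> h n < 1" by (auto simp: eventually_sequentially)
  define M where "M = max (W N) 2"
  have bnd: "W n \<le> M" if "n \<ge> N" for n
    using that
  proof (induction n rule: dec_induct)
    case base then show ?case by (simp add: M_def)
  next
    case (step n)
    have "W (Suc n) \<le> g n * W n + h n" by (rule Ws)
    also have "\<dots> \<le> g n * M + h n" using step g0 by (intro add_right_mono mult_left_mono) auto
    also have "\<dots> \<le> M/2 + 1"
    proof -
      have M0: "M \<ge> 0" by (simp add: M_def)
      have "g n * M \<le> (1/2) * M" using N[OF step(1)] M0 by (intro mult_right_mono) auto
      then show ?thesis using N[OF step(1)] by simp
    qed
    also have "\<dots> \<le> M" by (simp add: M_def)
    finally show ?case .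
  qed
  have up: "(\<lambda>n. g n * M + h n) \<longlonglongrightarrow> 0"
    using tendsto_add[OF tendsto_mult[OF gl tendsto_const[of M]] hl] by simp
  have "(\<lambda>n. W (Suc n)) \<longlonglongrightarrow> 0"
  proof (rule tendsto_sandwich[OF _ _ tendsto_const up])
    show "eventually (\<lambda>n. 0 \<le> W (Suc n)) sequentially" using W0 by simp
    show "eventually (\<lambda>n. W (Suc n) \<le> g n * M + h n) sequentially"
      unfolding eventually_sequentially
      using Ws g0 bnd order.trans mult_left_mono add_right_mono by meson
  qed
  then show ?thesis by (rule LIMSEQ_imp_Suc)
qed


lemma W_id:
  fixes P tau m W :: real assumes "P \<noteq> 0" "tau \<noteq> 0"
  shows "m*tau^2/P^2*(W+1/tau) = (m*tau/P) * (tau/P*W + 1/P)"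
  using assms by (simp add: field_simps power2_eq_square)

lemma W_step:
  fixes a tau m W :: real assumes "a>0" "tau>0" "m\<ge>0" "W\<ge>0"
  shows "1/(a+m*tau) + m*tau^2/(a+m*tau)^2*(W+1/tau) \<le> tau/(a+m*tau)*W + 2/(a+m*tau)"
proof -
  have d: "a + m*tau > 0" using assms by (simp add: add_pos_nonneg)
  define q where "q = m*tau/(a+m*tau)"
  have q1: "q \<le> 1" "q \<ge> 0" using assms d by (auto simp: q_def divide_simps)
  have "m*tau^2/(a+m*tau)^2*(W+1/tau) = q * (tau/(a+m*tau)*W + 1/(a+m*tau))"
    using d assms unfolding q_def by (intro W_id) auto
  also have "\<dots> \<le> tau/(a+m*tau)*W + 1/(a+m*tau)"
    using q1 d assms by (intro mult_left_le_one_le) auto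
  finally show ?thesis by simp
qed

theorem theorem3:
  fixes mub sigmabar sigma mu0 sigma0 eps c :: real
  assumes "sigmabar > 0" and "sigma > 0"
    and "0 < eps" and "eps < 1" and "c > 0"
    and "mu0 \<noteq> mub"
  defines "m \<equiv> (\<lambda>t::nat. \<bar>mu0 - mub\<bar> / eps * (1 + 1 / c) * (sigma / sigmabar)\<^sup>2
                         * real t powr (1 + c))"
  shows "strongly_self_sustaining m (1 / sigmabar\<^sup>2) mub (1 / sigma\<^sup>2) mu0 sigma0 eps"
proof -
  define a where "a = 1 / sigmabar\<^sup>2"
  define tau where "tau = 1 / sigma\<^sup>2"
  define D where "D = \<bar>mu0 - mub\<bar>"
  define A where "A = D / eps * (1 + 1/c)"
  define x where "x t = A * real t powr (1+c)" for t :: nat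
  have a0: "a > 0" and tau0: "tau > 0" and D0: "D > 0" using assms by (auto simp: a_def tau_def D_def)
  have A0: "A > 0" using D0 assms by (simp add: A_def add_pos_pos)
  have x0: "x t \<ge> 0" for t using A0 by (simp add: x_def)
  have mt: "m t * tau = a * x t" for t
    using assms by (simp add: m_def a_def tau_def x_def A_def D_def field_simps power2_eq_square)
  have m0: "m t \<ge> 0" for t using assms by (simp add: m_def)
  have den: "a + m t * tau = a * (1 + x t)" for t using mt by (simp add: algebra_simps)
  have E: "\<bar>Emu m a mub tau mu0 t - mu0\<bar> \<le> D * (\<Sum>s=1..t. 1/(1+x s))" for t
  proof (induction t)
    case 0 then show ?case by simp
  next
    case (Suc t)
    have "\<bar>Emu m a mub tau mu0 (Suc t) - mu0\<bar>
       = \<bar>(a*mub + (m (Suc t) * tau) * Emu m a mub tau mu0 t)/(a + m (Suc t) * tau) - mu0\<bar>"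
      by (simp add: mult.assoc)
    also have "\<dots> \<le> \<bar>Emu m a mub tau mu0 t - mu0\<bar> + D * (a/(a + m (Suc t) * tau))"
      unfolding D_def using a0 m0 tau0 by (intro E_step) auto
    also have "a/(a + m (Suc t) * tau) = 1/(1 + x (Suc t))" using a0 by (simp add: den)
    finally show ?case using Suc D0 by (simp add: algebra_simps)
  qed
  have S: "(\<Sum>s=1..t. 1/(1+x s)) \<le> (1/A) * (1 + 1/c)" for t
  proof -
    have "(\<Sum>s=1..t. 1/(1+x s)) \<le> (\<Sum>s=1..t. (1/A) * real s powr (-(1+c)))"
    proof (rule sum_mono)
      fix s assume "s \<in> {1..t}"
      then have s1: "real s \<ge> 1" by simp
      have pp: "real s powr (1+c) > 0" using s1 by simp
      have xs: "x s > 0" using A0 pp by (simp add: x_def)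
      have "1/(1+x s) \<le> 1/(x s)" using xs by (intro divide_left_mono) auto
      also have "\<dots> = (1/A) * real s powr (-(1+c))" unfolding powr_minus by (simp add: x_def field_simps)
      finally show "1/(1+x s) \<le> (1/A) * real s powr (-(1+c))" .
    qed
    also have "\<dots> = (1/A) * (\<Sum>s=1..t. real s powr (-(1+c)))" by (simp add: sum_distrib_left)
    also have "\<dots> \<le> (1/A) * (1 + 1/c)" using sum_bound2[OF assms(5)] A0 by (intro mult_left_mono) auto
    finally show ?thesis .
  qed
  have Dfin: "D * ((1/A) * (1 + 1/c)) = eps"
  proof -
    define K where "K = D * (1 + 1/c)"
    have K0: "K > 0" using D0 assms by (simp add: K_def add_pos_pos)
    have AK: "A = K / eps" by (simp add: A_def K_def)
    have "D * ((1/A) * (1 + 1/c)) = K / A" by (simp add: K_def)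
    also have "\<dots> = eps" using K0 assms by (simp add: AK)
    finally show ?thesis .
  qed
  have part1: "\<bar>Emu m a mub tau mu0 t - mu0\<bar> \<le> eps" for t
  proof -
    have "\<bar>Emu m a mub tau mu0 t - mu0\<bar> \<le> D * ((1/A) * (1 + 1/c))"
      using E[of t] S[of t] D0 by (meson order.trans mult_left_mono less_imp_le)
    then show ?thesis using Dfin by simp
  qed
  define W where "W n = sigsq m a tau sigma0 n + Varmu m a tau sigma0 n" for n
  define B where "B n = 1/(a*(1 + x (Suc n)))" for n
  have sig0: "sigsq m a tau sigma0 n \<ge> 0" for n
    using a0 tau0 m0 by (cases n) (auto intro!: add_pos_nonneg)
  have V0: "Varmu m a tau sigma0 n \<ge> 0" for n
    by (induction n) (use a0 tau0 m0 sig0 in auto)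
  have W0: "W n \<ge> 0" for n using sig0 V0 by (simp add: W_def)
  have Ws: "W (Suc n) \<le> (tau * B n) * W n + 2 * B n" for n
  proof -
    have "W (Suc n) = 1/(a+m (Suc n)*tau) + m (Suc n)*tau^2/(a+m (Suc n)*tau)^2*(W n+1/tau)"
      by (simp add: W_def)
    also have "\<dots> \<le> tau/(a+m (Suc n)*tau)*W n + 2/(a+m (Suc n)*tau)"
      using a0 tau0 m0 W0 by (intro W_step) auto
    also have "\<dots> = (tau * B n) * W n + 2 * B n" by (simp add: B_def den)
    finally show ?thesis .
  qed
  have Bl: "B \<longlonglongrightarrow> 0"
  proof (rule tendsto_sandwich[OF _ _ tendsto_const])
    show "eventually (\<lambda>n. 0 \<le> B n) sequentially" using a0 x0 by (simp add: B_def add_nonneg_pos)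
    show "eventually (\<lambda>n. B n \<le> (1/(a*A)) * inverse (real (Suc n))) sequentially"
    proof (intro always_eventually allI)
      fix n
      have "real (Suc n) powr 1 \<le> real (Suc n) powr (1+c)" using assms by (intro powr_mono) auto
      then have "A * real (Suc n) \<le> x (Suc n)" using A0 by (simp add: x_def)
      then have "a * A * real (Suc n) \<le> a*(1 + x (Suc n))" using a0 by simp
      then show "B n \<le> (1/(a*A)) * inverse (real (Suc n))"
        using a0 A0 x0[of "Suc n"] by (simp add: B_def divide_simps)
    qed
    show "(\<lambda>n. (1/(a*A)) * inverse (real (Suc n))) \<longlonglongrightarrow> 0"
      using tendsto_mult[OF tendsto_const LIMSEQ_inverse_real_of_nat, of "1/(a*A)"] by simp
  qed
  have gl: "(\<lambda>n. tau * B n) \<longlonglongrightarrow> 0" using tendsto_mult[OF tendsto_const Bl, of tau] by simp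
  have hl: "(\<lambda>n. 2 * B n) \<longlonglongrightarrow> 0" using tendsto_mult[OF tendsto_const Bl, of 2] by simp
  have g0: "0 \<le> tau * B n" for n using a0 tau0 x0 by (simp add: B_def add_nonneg_pos)
  have Wl: "W \<longlonglongrightarrow> 0" by (rule decay[OF W0 Ws g0 gl hl])
  have Wb: "Bseq W" using Wl by (intro convergent_imp_Bseq convergentI)
  show ?thesis
    unfolding strongly_self_sustaining_def self_sustaining_def a_def[symmetric] tau_def[symmetric]
    using part1 Wb Wl by (simp add: W_def[abs_def])
qed

end
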